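(* Let $(G,\mathcal{C})$ be a CER graph. If $\{v,w\}\in\tilde E$ and $c(v,w)=k\in F_i$ for some $i\in[r]$, then $c(v)=c(w)=i$.
   Context: $G=(V,E)$ finite simple undirected graph, $V=[p]$; coloring: vertex color classes $V_1,\dots,V_r$, edge color classes $E_{r+1},\dots,E_{r+R}$ partitioning $E$. $\tilde E=E\cup\{\{v\}:v\in V\}$, $E_i=\{\{v\}:v\in V_i\}$; $c(v,w)=k$ iff $\{v,w\}\in E_k$; $c(v)=c(v,v)$. $F_i=\{c(v,w):\{v,w\}\in\tilde E,\ c(v)=c(w)=i\}$. For an ordering $(V_{\eta_1},\dots,V_{\eta_r})$: $\pi(v)=i$ iff $v\in V_{\eta_i}$, $V_{\le i}=V_{\eta_1}\cup\dots\cup V_{\eta_i}$; it is a cpeo if every $v\in V_{\eta_i}$ is simplicial (neighbours form a clique) in $G[V_{\eta_i}\cup\dots\cup V_{\eta_r}]$; $m_{v\to w}(k,h)=|\{u\in V_{\le\min(\pi(v),\pi(w))}: c(v,u)=k, c(u,w)=h\}|$ and $m_{v\leftrightarrow w}(k,h)=m_{v\to w}(k,h)+m_{v\to w}(h,k)$ for $\{v,w\}\in\tilde E$. (M1): $c(v,w)=c(v',w')$ implies $m_{v\leftrightarrow w}=m_{v'\leftrightarrow w'}$. $(G,\mathcal{C})$ is CER if some ordering is a cpeo and satisfies (M1). *)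

theory Defs
  imports Main
begin

text \<open>A colouring is a function
  col on tilde-E: singletons {v} get vertex colours in {1..r}, edges get colours in
  {r+1..r+R}; every colour class is nonempty (partition). c(v,w) = col {v,w}.\<close>

definition simple_graph :: "nat \<Rightarrow> nat set set \<Rightarrow> bool" where
  "simple_graph p E \<equiv> (\<forall>e\<in>E. e \<subseteq> {1..p} \<and> card e = 2)"

definition Et :: "nat \<Rightarrow> nat set set \<Rightarrow> nat set set" where
  "Et p E = E \<union> {{v} | v. v \<in> {1..p}}"

definition coloring :: "nat \<Rightarrow> nat set set \<Rightarrow> nat \<Rightarrow> nat \<Rightarrow> (nat set \<Rightarrow> nat) \<Rightarrow> bool" where
  "coloring p E r R col \<equiv> simple_graph p E
     \<and> (\<forall>v\<in>{1..p}. col {v} \<in> {1..r})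
     \<and> (\<forall>e\<in>E. col e \<in> {r+1..r+R})
     \<and> (\<forall>i\<in>{1..r}. \<exists>v\<in>{1..p}. col {v} = i)
     \<and> (\<forall>k\<in>{r+1..r+R}. \<exists>e\<in>E. col e = k)"

definition Fcol :: "nat \<Rightarrow> nat set set \<Rightarrow> (nat set \<Rightarrow> nat) \<Rightarrow> nat \<Rightarrow> nat set" where
  "Fcol p E col i = {col {v,w} | v w. {v,w} \<in> Et p E \<and> col {v} = i \<and> col {w} = i}"

text \<open>Position pi(v) = i iff v is in V_(eta i).\<close>
definition pos :: "nat \<Rightarrow> (nat set \<Rightarrow> nat) \<Rightarrow> (nat \<Rightarrow> nat) \<Rightarrow> nat \<Rightarrow> nat" where
  "pos r col \<eta> v = inv_into {1..r} \<eta> (col {v})"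

definition mdir :: "nat \<Rightarrow> nat set set \<Rightarrow> nat \<Rightarrow> (nat set \<Rightarrow> nat) \<Rightarrow> (nat \<Rightarrow> nat)
    \<Rightarrow> nat \<Rightarrow> nat \<Rightarrow> nat \<Rightarrow> nat \<Rightarrow> nat" where
  "mdir p E r col \<eta> v w k h = card {u \<in> {1..p}.
      pos r col \<eta> u \<le> min (pos r col \<eta> v) (pos r col \<eta> w)
      \<and> {v,u} \<in> Et p E \<and> {u,w} \<in> Et p E \<and> col {v,u} = k \<and> col {u,w} = h}"

definition msym :: "nat \<Rightarrow> nat set set \<Rightarrow> nat \<Rightarrow> (nat set \<Rightarrow> nat) \<Rightarrow> (nat \<Rightarrow> nat)
    \<Rightarrow> nat \<Rightarrow> nat \<Rightarrow> nat \<Rightarrow> nat \<Rightarrow> nat" where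
  "msym p E r col \<eta> v w k h = mdir p E r col \<eta> v w k h + mdir p E r col \<eta> v w h k"

definition is_cpeo :: "nat \<Rightarrow> nat set set \<Rightarrow> nat \<Rightarrow> (nat set \<Rightarrow> nat) \<Rightarrow> (nat \<Rightarrow> nat) \<Rightarrow> bool" where
  "is_cpeo p E r col \<eta> \<equiv> (\<forall>v\<in>{1..p}. \<forall>a b.
      {v,a} \<in> E \<and> {v,b} \<in> E \<and> a \<noteq> b
      \<and> pos r col \<eta> v \<le> pos r col \<eta> a \<and> pos r col \<eta> v \<le> pos r col \<eta> b
      \<longrightarrow> {a,b} \<in> E)"

definition M1 :: "nat \<Rightarrow> nat set set \<Rightarrow> nat \<Rightarrow> (nat set \<Rightarrow> nat) \<Rightarrow> (nat \<Rightarrow> nat) \<Rightarrow> bool" where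
  "M1 p E r col \<eta> \<equiv> (\<forall>v w v' w'. {v,w} \<in> Et p E \<and> {v',w'} \<in> Et p E
      \<and> col {v,w} = col {v',w'} \<longrightarrow> msym p E r col \<eta> v w = msym p E r col \<eta> v' w')"

definition CER :: "nat \<Rightarrow> nat set set \<Rightarrow> nat \<Rightarrow> nat \<Rightarrow> (nat set \<Rightarrow> nat) \<Rightarrow> bool" where
  "CER p E r R col \<equiv> coloring p E r R col \<and>
     (\<exists>\<eta>. bij_betw \<eta> {1..r} {1..r} \<and> is_cpeo p E r col \<eta> \<and> M1 p E r col \<eta>)"

end

theory Submission
  imports Defs
begin

lemma et_notE: "{v,u} \<in> Et p E \<Longrightarrow> {v,u} \<notin> E \<Longrightarrow> u = v"
  unfolding Et_def by (auto simp: doubleton_eq_iff)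

lemma edge_col_big:
  assumes "coloring p E r R col" "e \<in> E" shows "col e > r"
  using assms unfolding coloring_def by force

lemma edge_in:
  assumes "coloring p E r R col" "{v,w} \<in> E" shows "v \<in> {1..p}" "w \<in> {1..p}"
  using assms unfolding coloring_def simple_graph_def by auto

lemma mdir1:
  assumes c: "coloring p E r R col" and e: "{v,w} \<in> E" and k: "col {v,w} = k" and a: "a \<le> r"
  shows "mdir p E r col \<eta> v w a k = (if pos r col \<eta> v \<le> pos r col \<eta> w \<and> col {v} = a then 1 else 0)"
proof -
  have vp: "v \<in> {1..p}" using edge_in[OF c e] by auto
  have "{u \<in> {1..p}. pos r col \<eta> u \<le> min (pos r col \<eta> v) (pos r col \<eta> w)
      \<and> {v,u} \<in> Et p E \<and> {u,w} \<in> Et p E \<and> col {v,u} = a \<and> col {u,w} = k}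
      = (if pos r col \<eta> v \<le> pos r col \<eta> w \<and> col {v} = a then {v} else {})"
  proof (rule set_eqI, rule iffI)
    fix u assume u: "u \<in> {u \<in> {1..p}. pos r col \<eta> u \<le> min (pos r col \<eta> v) (pos r col \<eta> w)
      \<and> {v,u} \<in> Et p E \<and> {u,w} \<in> Et p E \<and> col {v,u} = a \<and> col {u,w} = k}"
    have "{v,u} \<notin> E" using u a edge_col_big[OF c] by force
    then have "u = v" using u et_notE by blast
    then show "u \<in> (if pos r col \<eta> v \<le> pos r col \<eta> w \<and> col {v} = a then {v} else {})"
      using u by auto
  next
    fix u assume "u \<in> (if pos r col \<eta> v \<le> pos r col \<eta> w \<and> col {v} = a then {v} else {})"
    then show "u \<in> {u \<in> {1..p}. pos r col \<eta> u \<le> min (pos r col \<eta> v) (pos r col \<eta> w)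
      \<and> {v,u} \<in> Et p E \<and> {u,w} \<in> Et p E \<and> col {v,u} = a \<and> col {u,w} = k}"
      using vp e k by (auto split: if_splits simp: Et_def)
  qed
  then show ?thesis unfolding mdir_def by simp
qed

lemma mdir2:
  assumes c: "coloring p E r R col" and e: "{v,w} \<in> E" and k: "col {v,w} = k" and a: "a \<le> r"
  shows "mdir p E r col \<eta> v w k a = (if pos r col \<eta> w \<le> pos r col \<eta> v \<and> col {w} = a then 1 else 0)"
proof -
  have wp: "w \<in> {1..p}" using edge_in[OF c e] by auto
  have "{u \<in> {1..p}. pos r col \<eta> u \<le> min (pos r col \<eta> v) (pos r col \<eta> w)
      \<and> {v,u} \<in> Et p E \<and> {u,w} \<in> Et p E \<and> col {v,u} = k \<and> col {u,w} = a}
      = (if pos r col \<eta> w \<le> pos r col \<eta> v \<and> col {w} = a then {w} else {})"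
  proof (rule set_eqI, rule iffI)
    fix u assume u: "u \<in> {u \<in> {1..p}. pos r col \<eta> u \<le> min (pos r col \<eta> v) (pos r col \<eta> w)
      \<and> {v,u} \<in> Et p E \<and> {u,w} \<in> Et p E \<and> col {v,u} = k \<and> col {u,w} = a}"
    have "{w,u} \<notin> E" using u a edge_col_big[OF c] by (force simp: insert_commute)
    moreover have "{w,u} \<in> Et p E" using u by (simp add: insert_commute)
    ultimately have "u = w" using et_notE by blast
    then show "u \<in> (if pos r col \<eta> w \<le> pos r col \<eta> v \<and> col {w} = a then {w} else {})"
      using u by auto
  next
    fix u assume "u \<in> (if pos r col \<eta> w \<le> pos r col \<eta> v \<and> col {w} = a then {w} else {})"
    then show "u \<in> {u \<in> {1..p}. pos r col \<eta> u \<le> min (pos r col \<eta> v) (pos r col \<eta> w)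
      \<and> {v,u} \<in> Et p E \<and> {u,w} \<in> Et p E \<and> col {v,u} = k \<and> col {u,w} = a}"
      using wp e k by (auto split: if_splits simp: Et_def)
  qed
  then show ?thesis unfolding mdir_def by simp
qed

theorem lemma7p4:
  fixes p r R i :: nat and E :: "nat set set" and col :: "nat set \<Rightarrow> nat" and v w :: nat
  assumes "CER p E r R col"
    and "{v,w} \<in> Et p E"
    and "i \<in> {1..r}"
    and "col {v,w} \<in> Fcol p E col i"
  shows "col {v} = i \<and> col {w} = i"
proof -
  from assms(1) obtain \<eta> where c: "coloring p E r R col" and m1: "M1 p E r col \<eta>"
    unfolding CER_def by blast
  from assms(4) obtain v' w' where vw': "col {v,w} = col {v',w'}" "{v',w'} \<in> Et p E"
    "col {v'} = i" "col {w'} = i" unfolding Fcol_def by blast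
  show ?thesis
  proof (cases "v' = w'")
    case True
    then have "col {v,w} = i" using vw' by simp
    then have "{v,w} \<notin> E" using edge_col_big[OF c] assms(3) by force
    then have "w = v" using et_notE assms(2) by blast
    then show ?thesis using \<open>col {v,w} = i\<close> by simp
  next
    case False
    have e': "{v',w'} \<in> E" using False et_notE vw'(2) by blast
    define k where "k = col {v,w}"
    have "col {v,w} > r" using edge_col_big[OF c e'] vw'(1) by simp
    have e: "{v,w} \<in> E"
    proof (rule ccontr)
      assume "{v,w} \<notin> E"
      then have "w = v" using et_notE assms(2) by blast
      then have "v \<in> {1..p}" using assms(2) \<open>{v,w} \<notin> E\<close> unfolding Et_def by auto
      then have "col {v} \<le> r" using c unfolding coloring_def by auto
      then show False using \<open>col {v,w} > r\<close> \<open>w = v\<close> by simp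
    qed
    have ir: "i \<le> r" using assms(3) by simp
    have pe: "pos r col \<eta> v' = pos r col \<eta> w'" unfolding pos_def using vw' by simp
    have k1: "col {v,w} = k" by (simp add: k_def)
    have k2: "col {v',w'} = k" using vw'(1) by (simp add: k_def)
    have "msym p E r col \<eta> v w = msym p E r col \<eta> v' w'"
      using m1 assms(2) vw' unfolding M1_def by blast
    then have eq: "msym p E r col \<eta> v w i k = msym p E r col \<eta> v' w' i k" by simp
    have "msym p E r col \<eta> v' w' i k = 2" unfolding msym_def
      mdir1[OF c e' k2 ir] mdir2[OF c e' k2 ir] using vw'(3,4) pe by simp
    with eq have "msym p E r col \<eta> v w i k = 2" by simp
    then show ?thesis unfolding msym_def mdir1[OF c e k1 ir] mdir2[OF c e k1 ir]
      by (simp split: if_splits)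
  qed
qed

end
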